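(* For every integer $n>0$, $\phi(e_n)=t$.
   Context: $e_n=\sum_{i_1<i_2<\dots<i_n,\ i_j\in\mathbb{Z}}x_{i_1}x_{i_2}\cdots x_{i_n}$ in commuting variables $x_i$, $i\in\mathbb{Z}$. A signed graph is a finite graph (loops and multiple edges allowed) with $\mathrm{sgn}:E\to\{+,-\}$; a coloring $\kappa:V\to\mathbb{Z}$ is proper if $\kappa(u)\ne\mathrm{sgn}(e)\kappa(v)$ for every edge $e$ with endpoints $u,v$. An orientation assigns to each half-edge (a loop has two) an arrow toward or away from the vertex, such that on a positive edge exactly one of the two arrows points toward its vertex and on a negative edge both point toward or both point away. A cycle is a closed walk in which, considering only the edges of the walk, every vertex of the walk has at least one arrow pointing into it and one pointing out of it; an orientation is acyclic if it has no cycle; a sink is a vertex all of whose incident arrows point toward it (an isolated vertex is a sink). A signed poset is an acyclic orientation $P$ of a signed graph. A proper coloring $\kappa$ preserves $P$ if for every edge $e$ and each endpoint $v$ of $e$, with $u$ the other endpoint ($u=v$ for a loop), the arrow of $P$ at the incidence of $e$ with $v$ points toward $v$ iff $\kappa(v)>\mathrm{sgn}(e)\kappa(u)$. $Y_P=\sum_\kappa\prod_v x_{\kappa(v)}$ over proper colorings preserving $P$; $\mathbb{Y}$ is the $\mathbb{Q}$-span of all $Y_P$ (it is closed under products and contains each $e_n$). $\phi:\mathbb{Y}\to\mathbb{Q}[t]$ is the (unique) $\mathbb{Q}$-linear map with $\phi(Y_P)=t^{\mathrm{sink}(P)}$, $\mathrm{sink}(P)$ the number of sinks of $P$ (its existence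 is established in the paper). *)

theory Defs
  imports Main "HOL-Library.Multiset" "HOL-Library.FuncSet"
    "HOL-Computational_Algebra.Polynomial"
begin

text \<open>A signed graph with an orientation.
  Edge e has two ends, ends e True and ends e False (equal for a loop).
  pos e: the sign of e is positive. arr e b: the arrow at the half-edge (e,b)
  points toward its vertex ends e b.\<close>
record sposet =
  V :: "nat set"
  E :: "nat set"
  ends :: "nat \<Rightarrow> bool \<Rightarrow> nat"
  pos :: "nat \<Rightarrow> bool"
  arr :: "nat \<Rightarrow> bool \<Rightarrow> bool"

definition sgnval :: "sposet \<Rightarrow> nat \<Rightarrow> int" where
  "sgnval P e = (if pos P e then 1 else -1)"

definition is_orientation :: "sposet \<Rightarrow> bool" where
  "is_orientation P \<longleftrightarrow> finite (V P) \<and> finite (E P) \<and>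
     (\<forall>e\<in>E P. \<forall>b. ends P e b \<in> V P) \<and>
     (\<forall>e\<in>E P. (pos P e \<longleftrightarrow> arr P e True \<noteq> arr P e False))"

text \<open>A walk is a list of (e,b): traverse edge e from ends e b to ends e (\<not>b).\<close>
definition closed_walk :: "sposet \<Rightarrow> (nat \<times> bool) list \<Rightarrow> bool" where
  "closed_walk P ws \<longleftrightarrow> ws \<noteq> [] \<and> (\<forall>(e,b)\<in>set ws. e \<in> E P) \<and>
     (\<forall>i. Suc i < length ws \<longrightarrow>
        ends P (fst (ws!i)) (\<not> snd (ws!i)) = ends P (fst (ws!Suc i)) (snd (ws!Suc i))) \<and>
     ends P (fst (last ws)) (\<not> snd (last ws)) = ends P (fst (hd ws)) (snd (hd ws))"

definition walk_vertices :: "sposet \<Rightarrow> (nat \<times> bool) list \<Rightarrow> nat set" where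
  "walk_vertices P ws = {ends P e b | e b. e \<in> fst ` set ws}"

definition is_cycle :: "sposet \<Rightarrow> (nat \<times> bool) list \<Rightarrow> bool" where
  "is_cycle P ws \<longleftrightarrow> closed_walk P ws \<and>
     (\<forall>v\<in>walk_vertices P ws.
        (\<exists>e\<in>fst ` set ws. \<exists>b. ends P e b = v \<and> arr P e b) \<and>
        (\<exists>e\<in>fst ` set ws. \<exists>b. ends P e b = v \<and> \<not> arr P e b))"

definition signed_poset :: "sposet \<Rightarrow> bool" where
  "signed_poset P \<longleftrightarrow> is_orientation P \<and> (\<nexists>ws. is_cycle P ws)"

definition sinks :: "sposet \<Rightarrow> nat set" where
  "sinks P = {v \<in> V P. \<forall>e\<in>E P. \<forall>b. ends P e b = v \<longrightarrow> arr P e b}"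

definition proper_coloring :: "sposet \<Rightarrow> (nat \<Rightarrow> int) \<Rightarrow> bool" where
  "proper_coloring P \<kappa> \<longleftrightarrow>
     (\<forall>e\<in>E P. \<kappa> (ends P e True) \<noteq> sgnval P e * \<kappa> (ends P e False))"

definition preserves :: "sposet \<Rightarrow> (nat \<Rightarrow> int) \<Rightarrow> bool" where
  "preserves P \<kappa> \<longleftrightarrow>
     (\<forall>e\<in>E P. \<forall>b. arr P e b \<longleftrightarrow> \<kappa> (ends P e b) > sgnval P e * \<kappa> (ends P e (\<not> b)))"

text \<open>Formal power series in commuting variables x_i (i \<in> \<int>): coefficient functions on monomials,
  a monomial being a finite multiset of indices.\<close>
type_synonym fps_Z = "int multiset \<Rightarrow> rat"

definition Ypos :: "sposet \<Rightarrow> fps_Z" where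
  "Ypos P m = of_nat (card {\<kappa> \<in> V P \<rightarrow>\<^sub>E (UNIV :: int set).
       proper_coloring P \<kappa> \<and> preserves P \<kappa> \<and> image_mset \<kappa> (mset_set (V P)) = m})"

definition elem_sym :: "nat \<Rightarrow> fps_Z" where
  "elem_sym n m = (if size m = n \<and> (\<forall>i. count m i \<le> 1) then 1 else 0)"

definition represents :: "(rat \<times> sposet) list \<Rightarrow> fps_Z \<Rightarrow> bool" where
  "represents rs f \<longleftrightarrow> (\<forall>(c,P)\<in>set rs. signed_poset P) \<and>
     f = (\<lambda>m. (\<Sum>(c,P)\<leftarrow>rs. c * Ypos P m))"

definition phi :: "fps_Z \<Rightarrow> rat poly" where
  "phi f = (THE p. \<exists>rs. represents rs f \<and>
              p = (\<Sum>(c,P)\<leftarrow>rs. smult c (monom 1 (card (sinks P)))))"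

end

theory Submission
  imports Defs "HOL-Library.Nat_Bijection"
begin

definition srcs :: "sposet \<Rightarrow> nat set" where
  "srcs P = {v \<in> V P. \<forall>e\<in>E P. \<forall>b. ends P e b = v \<longrightarrow> \<not> arr P e b}"

lemma closed_walk_alt:
  "closed_walk P ws \<longleftrightarrow> ws \<noteq> [] \<and> (\<forall>(e,b)\<in>set ws. e \<in> E P) \<and>
     successively (\<lambda>x y. ends P (fst x) (\<not> snd x) = ends P (fst y) (snd y)) ws \<and>
     ends P (fst (last ws)) (\<not> snd (last ws)) = ends P (fst (hd ws)) (snd (hd ws))"
  unfolding closed_walk_def successively_conv_nth by blast

lemma walk_end_exists:
  assumes cw: "closed_walk P ws" and v: "v \<in> walk_vertices P ws"
  shows "\<exists>i<length ws. ends P (fst (ws!i)) (\<not> snd (ws!i)) = v"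
proof -
  from v obtain e b where eb: "e \<in> fst ` set ws" "v = ends P e b"
    unfolding walk_vertices_def by blast
  then obtain i where i: "i < length ws" "fst (ws!i) = e"
    by (metis fst_conv in_set_conv_nth imageE)
  show ?thesis
  proof (cases "b = snd (ws!i)")
    case False
    then show ?thesis using i eb by (intro exI[of _ i]) auto
  next
    case True
    show ?thesis
    proof (cases i)
      case 0
      have "ws \<noteq> []" using cw unfolding closed_walk_def by auto
      then have "last ws = ws ! (length ws - 1)" "hd ws = ws ! 0" by (auto simp: last_conv_nth hd_conv_nth)
      then show ?thesis using cw True i eb 0 unfolding closed_walk_def
        by (intro exI[of _ "length ws - 1"]) auto
    next
      case (Suc j)
      then show ?thesis using cw True i eb unfolding closed_walk_def
        by (intro exI[of _ j]) auto
    qed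
  qed
qed

lemma walk_insert:
  assumes cw: "closed_walk P ws" and i: "i < length ws" and v: "ends P (fst (ws!i)) (\<not> snd (ws!i)) = v"
    and e: "e \<in> E P" and c: "ends P e c = v"
  shows "closed_walk P (take (Suc i) ws @ [(e,c),(e,\<not>c)] @ drop (Suc i) ws)"
proof -
  define R where "R = (\<lambda>x y. ends P (fst x) (\<not> snd x) = ends P (fst y) (snd y))"
  define A where "A = take (Suc i) ws"
  define D where "D = drop (Suc i) ws"
  define X where "X = [(e,c),(e,\<not>c)]"
  have ne: "ws \<noteq> []" and sw: "successively R ws" and edges: "\<forall>(e,b)\<in>set ws. e \<in> E P"
    and cl: "ends P (fst (last ws)) (\<not> snd (last ws)) = ends P (fst (hd ws)) (snd (hd ws))"
    using cw unfolding closed_walk_alt R_def by auto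
  have ws: "ws = A @ D" unfolding A_def D_def by simp
  have sA: "successively R A" and sD: "successively R D"
    using sw ws by (metis successively_append_iff)+
  have lA: "last A = ws ! i" using i unfolding A_def by (simp add: take_Suc_conv_app_nth)
  have Ane: "A \<noteq> []" using ne unfolding A_def by simp
  have hA: "hd A = hd ws" using ne unfolding A_def by simp
  have sX: "successively R X" unfolding X_def R_def by simp
  have jXD: "D \<noteq> [] \<Longrightarrow> R (last X) (hd D)"
  proof -
    assume Dne: "D \<noteq> []"
    then have si: "Suc i < length ws" unfolding D_def by simp
    have hD: "hd D = ws ! Suc i" unfolding D_def using si by (simp add: hd_drop_conv_nth)
    have "R (ws!i) (ws ! Suc i)" using sw si by (rule successively_nth)
    then show ?thesis using hD v c unfolding R_def X_def by simp
  qed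
  have sXD: "successively R (X @ D)"
    using sX sD jXD by (auto simp add: successively_append_iff)
  have jA: "R (last A) (hd (X @ D))" using lA v c unfolding R_def X_def by simp
  have sAll: "successively R (A @ X @ D)"
    using sA sXD jA Ane by (simp add: successively_append_iff)
  have setw: "set (A @ X @ D) = set ws \<union> {(e,c),(e,\<not>c)}" using ws unfolding X_def by auto
  have edges': "\<forall>(e',b)\<in>set (A @ X @ D). e' \<in> E P" using setw edges e by auto
  have hd': "hd (A @ X @ D) = hd ws" using Ane hA by simp
  have last': "ends P (fst (last (A @ X @ D))) (\<not> snd (last (A @ X @ D))) = ends P (fst (hd ws)) (snd (hd ws))"
  proof (cases "D = []")
    case True
    then have "last ws = ws ! i" using lA ws by simp
    then show ?thesis using True cl v c unfolding X_def by simp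
  next
    case False
    then have "last (A @ X @ D) = last ws" using ws by simp
    then show ?thesis using cl by simp
  qed
  show ?thesis
    unfolding closed_walk_alt A_def[symmetric] D_def[symmetric] X_def[symmetric] R_def[symmetric]
    using sAll edges' hd' last' Ane by simp
qed

lemma exists_ss:
  assumes sp: "signed_poset P" and e0: "e0 \<in> E P"
  shows "\<exists>e\<in>E P. \<exists>b. ends P e b \<in> sinks P \<or> ends P e b \<in> srcs P"
proof (rule ccontr)
  assume H: "\<not> ?thesis"
  have ori: "is_orientation P" and acyc: "\<nexists>ws. is_cycle P ws" using sp unfolding signed_poset_def by auto
  have finE: "finite (E P)" and endsV: "\<forall>e\<in>E P. \<forall>b. ends P e b \<in> V P"
    using ori unfolding is_orientation_def by auto
  have H1: "\<exists>e'\<in>E P. \<exists>b'. ends P e' b' = ends P e b \<and> \<not> arr P e' b'"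
    and H2: "\<exists>e'\<in>E P. \<exists>b'. ends P e' b' = ends P e b \<and> arr P e' b'"
    if "e \<in> E P" for e b
    using H that endsV unfolding sinks_def srcs_def by blast+
  have w0: "closed_walk P [(e0,True),(e0,False)]"
    using e0 unfolding closed_walk_def by auto
  have bnd: "\<forall>ws. closed_walk P ws \<longrightarrow> card (fst ` set ws) < Suc (card (E P))"
  proof (intro allI impI)
    fix ws assume "closed_walk P ws"
    then have "fst ` set ws \<subseteq> E P" unfolding closed_walk_def by auto
    then show "card (fst ` set ws) < Suc (card (E P))" using finE by (simp add: card_mono le_imp_less_Suc)
  qed
  obtain ws where cw: "closed_walk P ws"
    and mx: "\<And>ws'. closed_walk P ws' \<Longrightarrow> card (fst ` set ws') \<le> card (fst ` set ws)"
    using ex_has_greatest_nat[of "closed_walk P" _ "\<lambda>ws. card (fst ` set ws)", OF w0 bnd] by blast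
  have wE: "fst ` set ws \<subseteq> E P" using cw unfolding closed_walk_def by auto
  have full: "e \<in> fst ` set ws" if v: "v \<in> walk_vertices P ws" and e: "e \<in> E P" and c: "ends P e c = v" for v e c
  proof (rule ccontr)
    assume ne: "e \<notin> fst ` set ws"
    obtain i where i: "i < length ws" "ends P (fst (ws!i)) (\<not> snd (ws!i)) = v"
      using walk_end_exists[OF cw v] by blast
    let ?ws' = "take (Suc i) ws @ [(e,c),(e,\<not>c)] @ drop (Suc i) ws"
    have cw': "closed_walk P ?ws'" using walk_insert[OF cw i e c] .
    have "set ?ws' = set (take (Suc i) ws) \<union> set (drop (Suc i) ws) \<union> {(e,c),(e,\<not>c)}" by auto
    also have "set (take (Suc i) ws) \<union> set (drop (Suc i) ws) = set ws"
      by (metis append_take_drop_id set_append)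
    finally have "set ?ws' = set ws \<union> {(e,c),(e,\<not>c)}" .
    then have "fst ` set ?ws' = insert e (fst ` set ws)" by auto
    moreover have "finite (fst ` set ws)" by simp
    ultimately have "card (fst ` set ?ws') = Suc (card (fst ` set ws))" using ne by simp
    then show False using mx[OF cw'] by simp
  qed
  have "is_cycle P ws"
    unfolding is_cycle_def
  proof (rule conjI[OF cw], intro ballI)
    fix v assume v: "v \<in> walk_vertices P ws"
    then obtain e b where eb: "e \<in> fst ` set ws" "v = ends P e b" unfolding walk_vertices_def by blast
    have eE: "e \<in> E P" using eb wE by auto
    obtain e1 b1 where 1: "e1 \<in> E P" "ends P e1 b1 = v" "\<not> arr P e1 b1" using H1[OF eE, of b] eb by auto
    obtain e2 b2 where 2: "e2 \<in> E P" "ends P e2 b2 = v" "arr P e2 b2" using H2[OF eE, of b] eb by auto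
    show "(\<exists>e\<in>fst ` set ws. \<exists>b. ends P e b = v \<and> arr P e b) \<and>
        (\<exists>e\<in>fst ` set ws. \<exists>b. ends P e b = v \<and> \<not> arr P e b)"
      using full[OF v 1(1,2)] full[OF v 2(1,2)] 1 2 by blast
  qed
  then show False using acyc by blast
qed

definition sub :: "sposet \<Rightarrow> nat set \<Rightarrow> sposet" where
  "sub P R = P\<lparr>V := R, E := {e \<in> E P. \<forall>b. ends P e b \<in> R}\<rparr>"

lemma sub_simps [simp]: "V (sub P R) = R" "E (sub P R) = {e \<in> E P. \<forall>b. ends P e b \<in> R}"
  "ends (sub P R) = ends P" "arr (sub P R) = arr P" "pos (sub P R) = pos P"
  by (simp_all add: sub_def)

lemma sgnval_sub [simp]: "sgnval (sub P R) = sgnval P"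
  by (simp add: sgnval_def fun_eq_iff)

lemma sub_sp:
  assumes sp: "signed_poset P" and R: "R \<subseteq> V P"
  shows "signed_poset (sub P R)"
proof -
  have ori: "is_orientation P" and acyc: "\<nexists>ws. is_cycle P ws" using sp unfolding signed_poset_def by auto
  have "is_orientation (sub P R)"
    using ori R unfolding is_orientation_def by (auto intro: finite_subset)
  moreover have "\<not> is_cycle (sub P R) ws" for ws
  proof
    assume c: "is_cycle (sub P R) ws"
    have wv: "walk_vertices (sub P R) ws = walk_vertices P ws" by (simp add: walk_vertices_def)
    have cw: "closed_walk (sub P R) ws" using c unfolding is_cycle_def by blast
    have "closed_walk P ws" using cw unfolding closed_walk_def sub_simps by fast
    then have "is_cycle P ws" using c unfolding is_cycle_def wv sub_simps by blast
    then show False using acyc by blast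
  qed
  ultimately show ?thesis unfolding signed_poset_def by blast
qed

definition km :: "nat set \<Rightarrow> (nat \<Rightarrow> int) \<Rightarrow> int" where
  "km W \<kappa> = Max (insert 0 ((\<lambda>v. \<bar>\<kappa> v\<bar>) ` W))"

definition canon :: "nat set \<Rightarrow> (nat \<Rightarrow> int) \<Rightarrow> bool" where
  "canon W \<kappa> \<longleftrightarrow> (\<lambda>v. \<bar>\<kappa> v\<bar>) ` W - {0} = {1..km W \<kappa>}"

definition CC :: "sposet \<Rightarrow> (nat \<Rightarrow> int) set" where
  "CC P = {\<kappa> \<in> V P \<rightarrow>\<^sub>E (UNIV :: int set). proper_coloring P \<kappa> \<and> preserves P \<kappa> \<and> canon (V P) \<kappa>}"

lemma km_ge: "finite W \<Longrightarrow> v \<in> W \<Longrightarrow> \<bar>\<kappa> v\<bar> \<le> km W \<kappa>"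
  unfolding km_def by (rule Max_ge) auto

lemma km_nonneg: "finite W \<Longrightarrow> 0 \<le> km W \<kappa>"
  unfolding km_def by (rule Max_ge) auto

lemma km_in: assumes "finite W" "km W \<kappa> > 0" shows "\<exists>v\<in>W. \<bar>\<kappa> v\<bar> = km W \<kappa>"
proof -
  have "km W \<kappa> \<in> insert 0 ((\<lambda>v. \<bar>\<kappa> v\<bar>) ` W)" unfolding km_def using assms(1) by (intro Max_in) auto
  then show ?thesis using assms(2) by auto
qed

lemma km_cong: "(\<And>v. v \<in> W \<Longrightarrow> \<kappa> v = \<kappa>' v) \<Longrightarrow> km W \<kappa> = km W \<kappa>'"
  unfolding km_def by (metis (no_types, lifting) image_cong)

lemma canon_cong: "(\<And>v. v \<in> W \<Longrightarrow> \<kappa> v = \<kappa>' v) \<Longrightarrow> canon W \<kappa> = canon W \<kappa>'"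
  unfolding canon_def using km_cong[of W \<kappa> \<kappa>'] by (metis (no_types, lifting) image_cong)

lemma km_le_card: assumes "finite W" "canon W \<kappa>" shows "km W \<kappa> \<le> int (card W)"
proof -
  have "card {1..km W \<kappa>} \<le> card W"
    using assms unfolding canon_def
    by (metis Diff_subset card_image_le card_mono finite_imageI order_trans)
  then show ?thesis by simp
qed

lemma finite_CC: assumes "finite (V P)" shows "finite (CC P)"
proof -
  let ?n = "int (card (V P))"
  have "CC P \<subseteq> V P \<rightarrow>\<^sub>E {-?n..?n}"
  proof
    fix \<kappa> assume k: "\<kappa> \<in> CC P"
    then have c: "canon (V P) \<kappa>" and pe: "\<kappa> \<in> V P \<rightarrow>\<^sub>E UNIV" unfolding CC_def by auto
    have "\<bar>\<kappa> v\<bar> \<le> ?n" if "v \<in> V P" for v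
      using km_ge[OF assms that, of \<kappa>] km_le_card[OF assms c] by linarith
    then show "\<kappa> \<in> V P \<rightarrow>\<^sub>E {-?n..?n}" using pe by (force simp: PiE_def Pi_def abs_le_iff)
  qed
  moreover have "finite (V P \<rightarrow>\<^sub>E {-?n..?n})" using assms by (intro finite_PiE) auto
  ultimately show ?thesis by (rule finite_subset)
qed

definition Bp :: "sposet \<Rightarrow> (nat \<Rightarrow> int) \<Rightarrow> nat set" where
  "Bp P \<kappa> = {v \<in> V P. \<kappa> v = km (V P) \<kappa>}"
definition Bm :: "sposet \<Rightarrow> (nat \<Rightarrow> int) \<Rightarrow> nat set" where
  "Bm P \<kappa> = {v \<in> V P. \<kappa> v = - km (V P) \<kappa>}"
definition ext :: "sposet \<Rightarrow> nat set \<Rightarrow> nat set \<Rightarrow> (nat \<Rightarrow> int) \<Rightarrow> (nat \<Rightarrow> int)" where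
  "ext P B1 B2 \<kappa>' = restrict (\<lambda>v. if v \<in> B1 then km (V P - B1 - B2) \<kappa>' + 1
      else if v \<in> B2 then - (km (V P - B1 - B2) \<kappa>' + 1) else \<kappa>' v) (V P)"
definition Pairs :: "sposet \<Rightarrow> (nat set \<times> nat set) set" where
  "Pairs P = {(B1,B2). B1 \<subseteq> sinks P \<and> B2 \<subseteq> srcs P \<and> B1 \<inter> B2 = {} \<and> B1 \<union> B2 \<noteq> {}}"
definition zero :: "sposet \<Rightarrow> (nat \<Rightarrow> int)" where
  "zero P = restrict (\<lambda>_. 0) (V P)"

lemma pp_iff: "proper_coloring P \<kappa> \<and> preserves P \<kappa> \<longleftrightarrow>
  (\<forall>e\<in>E P. \<kappa> (ends P e True) \<noteq> sgnval P e * \<kappa> (ends P e False) \<and>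
     (\<forall>b. arr P e b \<longleftrightarrow> \<kappa> (ends P e b) > sgnval P e * \<kappa> (ends P e (\<not> b))))"
  unfolding proper_coloring_def preserves_def by blast

lemma edge_arith:
  fixes a c k s :: int and p x y :: bool
  assumes k1: "k \<ge> 1" and s: "s = 1 \<and> p \<or> s = -1 \<and> \<not> p" and o: "p \<longleftrightarrow> x \<noteq> y"
    and A: "a = k \<and> x \<or> a = -k \<and> \<not> x \<or> \<bar>a\<bar> \<le> k - 1"
    and B: "c = k \<and> y \<or> c = -k \<and> \<not> y \<or> \<bar>c\<bar> \<le> k - 1"
    and N: "\<not> (\<bar>a\<bar> \<le> k - 1 \<and> \<bar>c\<bar> \<le> k - 1)"
  shows "a \<noteq> s * c \<and> (x \<longleftrightarrow> a > s * c) \<and> (y \<longleftrightarrow> c > s * a)"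
  using s o A B N k1 by (elim disjE conjE; simp add: abs_le_iff; arith?)

lemma sgn_cases: "sgnval P e = 1 \<and> pos P e \<or> sgnval P e = -1 \<and> \<not> pos P e"
  unfolding sgnval_def by auto

lemma ext_props:
  assumes ori: "is_orientation P" and pr: "(B1,B2) \<in> Pairs P"
    and k': "\<kappa>' \<in> CC (sub P (V P - B1 - B2))"
  shows "ext P B1 B2 \<kappa>' \<in> CC P" "km (V P) (ext P B1 B2 \<kappa>') = km (V P - B1 - B2) \<kappa>' + 1"
    "Bp P (ext P B1 B2 \<kappa>') = B1" "Bm P (ext P B1 B2 \<kappa>') = B2"
    "restrict (ext P B1 B2 \<kappa>') (V P - B1 - B2) = \<kappa>'"
proof -
  define R where "R = V P - B1 - B2"
  define k where "k = km R \<kappa>' + 1"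
  define \<kappa> where "\<kappa> = ext P B1 B2 \<kappa>'"
  have finV: "finite (V P)" and endsV: "\<forall>e\<in>E P. \<forall>b. ends P e b \<in> V P"
    and orE: "\<forall>e\<in>E P. (pos P e \<longleftrightarrow> arr P e True \<noteq> arr P e False)"
    using ori unfolding is_orientation_def by auto
  have B1s: "B1 \<subseteq> sinks P" and B2s: "B2 \<subseteq> srcs P" and dis: "B1 \<inter> B2 = {}" and ne: "B1 \<union> B2 \<noteq> {}"
    using pr unfolding Pairs_def by auto
  have B1V: "B1 \<subseteq> V P" and B2V: "B2 \<subseteq> V P" using B1s B2s unfolding sinks_def srcs_def by auto
  have sink: "arr P e b" if "e \<in> E P" "ends P e b \<in> B1" for e b using that B1s unfolding sinks_def by auto
  have src: "\<not> arr P e b" if "e \<in> E P" "ends P e b \<in> B2" for e b using that B2s unfolding srcs_def by auto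
  have finR: "finite R" using finV unfolding R_def by auto
  have k'CC: "\<kappa>' \<in> R \<rightarrow>\<^sub>E UNIV" "proper_coloring (sub P R) \<kappa>'" "preserves (sub P R) \<kappa>'" "canon R \<kappa>'"
    using k' unfolding CC_def R_def by auto
  have k1: "k \<ge> 1" using km_nonneg[OF finR] unfolding k_def by auto
  have bndR: "\<bar>\<kappa>' v\<bar> \<le> k - 1" if "v \<in> R" for v using km_ge[OF finR that] unfolding k_def by auto
  have bndR': "\<bar>\<kappa>' v\<bar> \<le> k" if "v \<in> R" for v using bndR[OF that] by simp
  have kv: "\<kappa> v = (if v \<in> B1 then k else if v \<in> B2 then -k else \<kappa>' v)" if "v \<in> V P" for v
    using that unfolding \<kappa>_def ext_def k_def R_def by auto
  have kB1: "\<kappa> v = k" if "v \<in> B1" for v using kv that B1V by auto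
  have kB2: "\<kappa> v = -k" if "v \<in> B2" for v
  proof -
    have "v \<in> V P" "v \<notin> B1" using that B2V dis by auto
    then show ?thesis using kv[of v] that by simp
  qed
  have kR: "\<kappa> v = \<kappa>' v" if "v \<in> R" for v using kv that unfolding R_def by auto
  have VR: "V P = B1 \<union> B2 \<union> R" unfolding R_def using B1V B2V by auto
  have ppR: "\<forall>e\<in>E (sub P R). \<kappa>' (ends P e True) \<noteq> sgnval P e * \<kappa>' (ends P e False) \<and>
     (\<forall>b. arr P e b \<longleftrightarrow> \<kappa>' (ends P e b) > sgnval P e * \<kappa>' (ends P e (\<not> b)))"
    using k'CC(2,3) pp_iff[of "sub P R" \<kappa>'] unfolding sgnval_sub sub_simps by blast
  have edge: "\<kappa> (ends P e True) \<noteq> sgnval P e * \<kappa> (ends P e False) \<and>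
     (\<forall>b. arr P e b \<longleftrightarrow> \<kappa> (ends P e b) > sgnval P e * \<kappa> (ends P e (\<not> b)))" if e: "e \<in> E P" for e
  proof (cases "ends P e True \<in> R \<and> ends P e False \<in> R")
    case True
    then have "e \<in> E (sub P R)" using e by (simp add: all_bool_eq)
    then have "\<kappa>' (ends P e True) \<noteq> sgnval P e * \<kappa>' (ends P e False) \<and>
     (\<forall>b. arr P e b \<longleftrightarrow> \<kappa>' (ends P e b) > sgnval P e * \<kappa>' (ends P e (\<not> b)))" using ppR by blast
    moreover have "\<kappa> (ends P e b) = \<kappa>' (ends P e b)" for b using True kR by (cases b) simp_all
    ultimately show ?thesis by simp
  next
    case False
    have inV: "ends P e b \<in> V P" for b using endsV e by auto
    have o: "pos P e \<longleftrightarrow> arr P e True \<noteq> arr P e False" using orE e by auto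
    have vals: "\<kappa> (ends P e b) = k \<and> arr P e b \<or> \<kappa> (ends P e b) = -k \<and> \<not> arr P e b \<or>
       \<bar>\<kappa> (ends P e b)\<bar> \<le> k - 1" for b
    proof -
      have "ends P e b \<in> B1 \<or> ends P e b \<in> B2 \<or> ends P e b \<in> R" using inV[of b] VR by blast
      then show ?thesis
      proof (elim disjE)
        assume h: "ends P e b \<in> B1" show ?thesis using kB1[OF h] sink[OF e h] by blast
      next
        assume h: "ends P e b \<in> B2" show ?thesis using kB2[OF h] src[OF e h] by blast
      next
        assume h: "ends P e b \<in> R" show ?thesis using kR[OF h] bndR[OF h] by simp
      qed
    qed
    have inR: "ends P e b \<in> R" if "\<bar>\<kappa> (ends P e b)\<bar> \<le> k - 1" for b
    proof (rule ccontr)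
      assume "ends P e b \<notin> R"
      then have "ends P e b \<in> B1 \<or> ends P e b \<in> B2" using inV[of b] VR by blast
      then have "\<bar>\<kappa> (ends P e b)\<bar> = k" using kB1 kB2 k1 by auto
      then show False using that by simp
    qed
    have N: "\<not> (\<bar>\<kappa> (ends P e True)\<bar> \<le> k - 1 \<and> \<bar>\<kappa> (ends P e False)\<bar> \<le> k - 1)"
      using False inR by blast
    have "\<kappa> (ends P e True) \<noteq> sgnval P e * \<kappa> (ends P e False) \<and>
      (arr P e True \<longleftrightarrow> \<kappa> (ends P e True) > sgnval P e * \<kappa> (ends P e False)) \<and>
      (arr P e False \<longleftrightarrow> \<kappa> (ends P e False) > sgnval P e * \<kappa> (ends P e True))"
      by (rule edge_arith[OF k1 sgn_cases o vals[of True] _ N]) (use vals[of False] in simp)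
    then show ?thesis unfolding all_bool_eq by simp
  qed
  have imgR: "(\<lambda>v. \<bar>\<kappa>' v\<bar>) ` R - {0} = {1..k-1}" using k'CC(4) unfolding canon_def k_def by simp
  have img: "(\<lambda>v. \<bar>\<kappa> v\<bar>) ` V P = insert k ((\<lambda>v. \<bar>\<kappa>' v\<bar>) ` R)"
  proof -
    have "(\<lambda>v. \<bar>\<kappa> v\<bar>) ` (B1 \<union> B2) = (\<lambda>_. k) ` (B1 \<union> B2)"
      using kB1 kB2 k1 by (intro image_cong) auto
    then have "(\<lambda>v. \<bar>\<kappa> v\<bar>) ` (B1 \<union> B2) = {k}" using ne by (simp add: image_constant_conv)
    moreover have "(\<lambda>v. \<bar>\<kappa> v\<bar>) ` R = (\<lambda>v. \<bar>\<kappa>' v\<bar>) ` R" using kR by auto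
    ultimately show ?thesis using VR by (simp add: image_Un)
  qed
  have kmk: "km (V P) \<kappa> = k"
    unfolding km_def img
  proof (rule Max_eqI)
    show "finite (insert 0 (insert k ((\<lambda>v. \<bar>\<kappa>' v\<bar>) ` R)))" using finR by simp
    show "y \<le> k" if "y \<in> insert 0 (insert k ((\<lambda>v. \<bar>\<kappa>' v\<bar>) ` R))" for y using that bndR' k1 by auto
    show "k \<in> insert 0 (insert k ((\<lambda>v. \<bar>\<kappa>' v\<bar>) ` R))" by simp
  qed
  have "canon (V P) \<kappa>"
    unfolding canon_def kmk img
  proof -
    have "insert k ((\<lambda>v. \<bar>\<kappa>' v\<bar>) ` R) - {0} = insert k ((\<lambda>v. \<bar>\<kappa>' v\<bar>) ` R - {0})" using k1 by auto
    also have "\<dots> = {1..k}" unfolding imgR using k1 by auto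
    finally show "insert k ((\<lambda>v. \<bar>\<kappa>' v\<bar>) ` R) - {0} = {1..k}" .
  qed
  moreover have "\<kappa> \<in> V P \<rightarrow>\<^sub>E UNIV" unfolding \<kappa>_def ext_def by simp
  moreover have "proper_coloring P \<kappa> \<and> preserves P \<kappa>" unfolding pp_iff using edge by blast
  ultimately show "ext P B1 B2 \<kappa>' \<in> CC P" unfolding CC_def \<kappa>_def by blast
  show "km (V P) (ext P B1 B2 \<kappa>') = km (V P - B1 - B2) \<kappa>' + 1" using kmk unfolding \<kappa>_def k_def R_def .
  have nB1: "\<kappa> v \<noteq> k" if "v \<in> V P" "v \<notin> B1" for v
  proof (cases "v \<in> B2")
    case True then show ?thesis using kB2[OF True] k1 by simp
  next
    case False then have "v \<in> R" using that unfolding R_def by simp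
    then have "\<kappa> v = \<kappa>' v" "\<bar>\<kappa>' v\<bar> \<le> k - 1" using kR bndR by blast+
    then show ?thesis by arith
  qed
  have nB2: "\<kappa> v \<noteq> -k" if "v \<in> V P" "v \<notin> B2" for v
  proof (cases "v \<in> B1")
    case True then show ?thesis using kB1[OF True] k1 by simp
  next
    case False then have "v \<in> R" using that unfolding R_def by simp
    then have "\<kappa> v = \<kappa>' v" "\<bar>\<kappa>' v\<bar> \<le> k - 1" using kR bndR by blast+
    then show ?thesis by arith
  qed
  show "Bp P (ext P B1 B2 \<kappa>') = B1"
    unfolding \<kappa>_def[symmetric] Bp_def kmk using nB1 kB1 B1V by blast
  show "Bm P (ext P B1 B2 \<kappa>') = B2"
    unfolding \<kappa>_def[symmetric] Bm_def kmk using nB2 kB2 B2V by blast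
  have "restrict \<kappa> R = \<kappa>'"
  proof (rule ext)
    fix v show "restrict \<kappa> R v = \<kappa>' v"
    proof (cases "v \<in> R")
      case True then show ?thesis using kR[OF True] by (simp only: restrict_apply' True)
    next
      case False then show ?thesis using PiE_arb[OF k'CC(1) False] False by (simp only: restrict_apply if_False)
    qed
  qed
  then show "restrict (ext P B1 B2 \<kappa>') (V P - B1 - B2) = \<kappa>'" unfolding \<kappa>_def R_def .
qed

lemma top_props:
  assumes ori: "is_orientation P" and kC: "\<kappa> \<in> CC P" and kpos: "km (V P) \<kappa> > 0"
  shows "(Bp P \<kappa>, Bm P \<kappa>) \<in> Pairs P"
    "restrict \<kappa> (V P - Bp P \<kappa> - Bm P \<kappa>) \<in> CC (sub P (V P - Bp P \<kappa> - Bm P \<kappa>))"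
    "ext P (Bp P \<kappa>) (Bm P \<kappa>) (restrict \<kappa> (V P - Bp P \<kappa> - Bm P \<kappa>)) = \<kappa>"
proof -
  define k where "k = km (V P) \<kappa>"
  define B1 where "B1 = Bp P \<kappa>"
  define B2 where "B2 = Bm P \<kappa>"
  define R where "R = V P - B1 - B2"
  define \<kappa>' where "\<kappa>' = restrict \<kappa> R"
  have finV: "finite (V P)" and endsV: "\<forall>e\<in>E P. \<forall>b. ends P e b \<in> V P"
    using ori unfolding is_orientation_def by auto
  have kCC: "\<kappa> \<in> V P \<rightarrow>\<^sub>E UNIV" "proper_coloring P \<kappa>" "preserves P \<kappa>" "canon (V P) \<kappa>"
    using kC unfolding CC_def by auto
  have pp: "\<forall>e\<in>E P. \<kappa> (ends P e True) \<noteq> sgnval P e * \<kappa> (ends P e False) \<and>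
     (\<forall>b. arr P e b \<longleftrightarrow> \<kappa> (ends P e b) > sgnval P e * \<kappa> (ends P e (\<not> b)))"
    using kCC(2,3) pp_iff by blast
  have k1: "k \<ge> 1" using kpos unfolding k_def by simp
  have bnd: "\<bar>\<kappa> v\<bar> \<le> k" if "v \<in> V P" for v using km_ge[OF finV that] unfolding k_def .
  have B1V: "B1 \<subseteq> V P" and B2V: "B2 \<subseteq> V P" unfolding B1_def B2_def Bp_def Bm_def by auto
  have inB1: "v \<in> B1 \<longleftrightarrow> v \<in> V P \<and> \<kappa> v = k" for v unfolding B1_def Bp_def k_def by simp
  have inB2: "v \<in> B2 \<longleftrightarrow> v \<in> V P \<and> \<kappa> v = -k" for v unfolding B2_def Bm_def k_def by simp
  have inR: "v \<in> R \<longleftrightarrow> v \<in> V P \<and> \<bar>\<kappa> v\<bar> \<le> k - 1" for v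
  proof -
    have 1: "v \<in> R \<longleftrightarrow> v \<in> V P \<and> \<kappa> v \<noteq> k \<and> \<kappa> v \<noteq> -k" unfolding R_def using inB1 inB2 by auto
    have 2: "v \<in> V P \<Longrightarrow> (\<kappa> v \<noteq> k \<and> \<kappa> v \<noteq> -k \<longleftrightarrow> \<bar>\<kappa> v\<bar> \<le> k - 1)" using bnd[of v] by arith
    show ?thesis using 1 2 by blast
  qed
  have other: "sgnval P e * \<kappa> (ends P e (\<not> b)) \<noteq> \<kappa> (ends P e b)
     \<and> \<bar>sgnval P e * \<kappa> (ends P e (\<not> b))\<bar> \<le> k" if e: "e \<in> E P" for e b
  proof -
    have pr: "\<kappa> (ends P e True) \<noteq> sgnval P e * \<kappa> (ends P e False)" using pp e by blast
    have "\<bar>\<kappa> (ends P e (\<not> b))\<bar> \<le> k" using bnd endsV e by blast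
    then show ?thesis using pr sgn_cases[of P e] by (cases b) auto
  qed
  have B1s: "B1 \<subseteq> sinks P"
  proof
    fix v assume v: "v \<in> B1"
    have "arr P e b" if e: "e \<in> E P" and eb: "ends P e b = v" for e b
    proof -
      have "\<kappa> (ends P e b) = k" using v eb inB1 by simp
      moreover have "arr P e b \<longleftrightarrow> \<kappa> (ends P e b) > sgnval P e * \<kappa> (ends P e (\<not> b))" using pp e by blast
      ultimately show ?thesis using other[OF e, of b] by (auto simp: abs_le_iff)
    qed
    then show "v \<in> sinks P" using v B1V unfolding sinks_def by auto
  qed
  have B2s: "B2 \<subseteq> srcs P"
  proof
    fix v assume v: "v \<in> B2"
    have "\<not> arr P e b" if e: "e \<in> E P" and eb: "ends P e b = v" for e b
    proof -
      have "\<kappa> (ends P e b) = -k" using v eb inB2 by simp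
      moreover have "arr P e b \<longleftrightarrow> \<kappa> (ends P e b) > sgnval P e * \<kappa> (ends P e (\<not> b))" using pp e by blast
      ultimately show ?thesis using other[OF e, of b] by (auto simp: abs_le_iff)
    qed
    then show "v \<in> srcs P" using v B2V unfolding srcs_def by auto
  qed
  have dis: "B1 \<inter> B2 = {}" using inB1 inB2 k1 by auto
  obtain w where w: "w \<in> V P" "\<bar>\<kappa> w\<bar> = k" using km_in[OF finV kpos] unfolding k_def by blast
  have ne: "B1 \<union> B2 \<noteq> {}"
  proof -
    have "\<kappa> w = k \<or> \<kappa> w = -k" using w(2) by arith
    then show ?thesis using w(1) inB1 inB2 by blast
  qed
  show "(Bp P \<kappa>, Bm P \<kappa>) \<in> Pairs P" unfolding B1_def[symmetric] B2_def[symmetric] Pairs_def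
    using B1s B2s dis ne by simp
  have finR: "finite R" using finV unfolding R_def by simp
  have RV: "R \<subseteq> V P" unfolding R_def by auto
  have k'R: "\<kappa>' v = \<kappa> v" if "v \<in> R" for v unfolding \<kappa>'_def using that by (simp only: restrict_apply' that)
  have imgV: "(\<lambda>v. \<bar>\<kappa> v\<bar>) ` V P - {0} = {1..k}" using kCC(4) unfolding canon_def k_def .
  have imgR: "(\<lambda>v. \<bar>\<kappa>' v\<bar>) ` R - {0} = {1..k-1}"
  proof -
    have "(\<lambda>v. \<bar>\<kappa>' v\<bar>) ` R = (\<lambda>v. \<bar>\<kappa> v\<bar>) ` R" using k'R by (intro image_cong) auto
    also have "\<dots> = (\<lambda>v. \<bar>\<kappa> v\<bar>) ` V P - {k}"
    proof (intro set_eqI iffI)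
      fix y assume "y \<in> (\<lambda>v. \<bar>\<kappa> v\<bar>) ` R"
      then obtain v where "v \<in> R" "y = \<bar>\<kappa> v\<bar>" by blast
      then show "y \<in> (\<lambda>v. \<bar>\<kappa> v\<bar>) ` V P - {k}" using inR by force
    next
      fix y assume "y \<in> (\<lambda>v. \<bar>\<kappa> v\<bar>) ` V P - {k}"
      then obtain v where "v \<in> V P" "y = \<bar>\<kappa> v\<bar>" "y \<noteq> k" by blast
      then show "y \<in> (\<lambda>v. \<bar>\<kappa> v\<bar>) ` R" using inR bnd by force
    qed
    finally have "(\<lambda>v. \<bar>\<kappa>' v\<bar>) ` R - {0} = ((\<lambda>v. \<bar>\<kappa> v\<bar>) ` V P - {0}) - {k}" by blast
    also have "\<dots> = {1..k-1}" unfolding imgV by auto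
    finally show ?thesis .
  qed
  have kmR: "km R \<kappa>' = k - 1"
  proof (cases "k = 1")
    case True
    have "(\<lambda>v. \<bar>\<kappa>' v\<bar>) ` R \<subseteq> {0}" using imgR True by auto
    then have eq: "insert 0 ((\<lambda>v. \<bar>\<kappa>' v\<bar>) ` R) = {0}" by auto
    show ?thesis unfolding km_def eq using True by simp
  next
    case False
    show ?thesis unfolding km_def
    proof (rule Max_eqI)
      show "finite (insert 0 ((\<lambda>v. \<bar>\<kappa>' v\<bar>) ` R))" using finR by simp
      show "y \<le> k - 1" if "y \<in> insert 0 ((\<lambda>v. \<bar>\<kappa>' v\<bar>) ` R)" for y
      proof -
        have "y = 0 \<or> y \<in> (\<lambda>v. \<bar>\<kappa>' v\<bar>) ` R - {0}" using that by blast
        then show ?thesis unfolding imgR using k1 by auto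
      qed
      show "k - 1 \<in> insert 0 ((\<lambda>v. \<bar>\<kappa>' v\<bar>) ` R)" using imgR False k1 by auto
    qed
  qed
  have "\<kappa>' \<in> R \<rightarrow>\<^sub>E UNIV" unfolding \<kappa>'_def by simp
  moreover have "canon R \<kappa>'" unfolding canon_def kmR imgR ..
  moreover have "proper_coloring (sub P R) \<kappa>' \<and> preserves (sub P R) \<kappa>'"
    unfolding pp_iff sub_simps sgnval_sub
  proof (intro ballI)
    fix e assume e: "e \<in> {e \<in> E P. \<forall>b. ends P e b \<in> R}"
    have "\<kappa>' (ends P e b) = \<kappa> (ends P e b)" for b using e k'R by blast
    then show "\<kappa>' (ends P e True) \<noteq> sgnval P e * \<kappa>' (ends P e False) \<and>
         (\<forall>b. arr P e b = (sgnval P e * \<kappa>' (ends P e (\<not> b)) < \<kappa>' (ends P e b)))"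
      using pp e by simp
  qed
  ultimately show "restrict \<kappa> (V P - Bp P \<kappa> - Bm P \<kappa>) \<in> CC (sub P (V P - Bp P \<kappa> - Bm P \<kappa>))"
    unfolding CC_def B1_def[symmetric] B2_def[symmetric] R_def[symmetric] \<kappa>'_def[symmetric] by simp
  have "ext P B1 B2 \<kappa>' = \<kappa>"
  proof (rule ext)
    fix v
    show "ext P B1 B2 \<kappa>' v = \<kappa> v"
    proof (cases "v \<in> V P")
      case False
      then show ?thesis unfolding ext_def using PiE_arb[OF kCC(1) False] by (simp only: restrict_apply if_False)
    next
      case True
      have e: "ext P B1 B2 \<kappa>' v = (if v \<in> B1 then k else if v \<in> B2 then - k else \<kappa>' v)"
        unfolding ext_def R_def[symmetric] kmR using True by (simp only: restrict_apply' True) simp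
      show ?thesis unfolding e using inB1 inB2 k'R[of v] True unfolding R_def by auto
    qed
  qed
  then show "ext P (Bp P \<kappa>) (Bm P \<kappa>) (restrict \<kappa> (V P - Bp P \<kappa> - Bm P \<kappa>)) = \<kappa>"
    unfolding B1_def B2_def R_def \<kappa>'_def .
qed

lemma zero_part:
  assumes ori: "is_orientation P"
  shows "{\<kappa> \<in> CC P. km (V P) \<kappa> = 0} = (if E P = {} then {zero P} else {})"
proof -
  have finV: "finite (V P)" and endsV: "\<forall>e\<in>E P. \<forall>b. ends P e b \<in> V P"
    using ori unfolding is_orientation_def by auto
  have A: "\<kappa> = zero P \<and> E P = {}" if kC: "\<kappa> \<in> CC P" and k0: "km (V P) \<kappa> = 0" for \<kappa>
  proof -
    have kCC: "\<kappa> \<in> V P \<rightarrow>\<^sub>E UNIV" "proper_coloring P \<kappa>"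
      using kC unfolding CC_def by auto
    have z: "\<kappa> v = 0" if "v \<in> V P" for v using km_ge[OF finV that, of \<kappa>] k0 by simp
    have "\<kappa> = zero P"
    proof (rule ext)
      fix v show "\<kappa> v = zero P v"
      proof (cases "v \<in> V P")
        case True then show ?thesis using z[OF True] unfolding zero_def by (simp only: restrict_apply' True)
      next
        case False then show ?thesis using PiE_arb[OF kCC(1) False] unfolding zero_def
          by (simp only: restrict_apply if_False)
      qed
    qed
    moreover have "E P = {}"
    proof (rule ccontr)
      assume "E P \<noteq> {}"
      then obtain e where e: "e \<in> E P" by blast
      then have "\<kappa> (ends P e True) \<noteq> sgnval P e * \<kappa> (ends P e False)"
        using kCC(2) unfolding proper_coloring_def by blast
      moreover have "\<kappa> (ends P e True) = 0" "\<kappa> (ends P e False) = 0" using z endsV e by auto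
      ultimately show False by simp
    qed
    ultimately show ?thesis by blast
  qed
  have B: "zero P \<in> CC P \<and> km (V P) (zero P) = 0" if E0: "E P = {}"
  proof -
    have zv: "zero P v = 0" if "v \<in> V P" for v unfolding zero_def using that by (simp only: restrict_apply' that)
    have img: "(\<lambda>v. \<bar>zero P v\<bar>) ` V P \<subseteq> {0}" using zv by auto
    then have eq: "insert 0 ((\<lambda>v. \<bar>zero P v\<bar>) ` V P) = {0}" by auto
    have km0: "km (V P) (zero P) = 0" unfolding km_def eq by simp
    have "canon (V P) (zero P)" unfolding canon_def km0 using img by auto
    moreover have "zero P \<in> V P \<rightarrow>\<^sub>E UNIV" unfolding zero_def by simp
    moreover have "proper_coloring P (zero P)" "preserves P (zero P)"
      unfolding proper_coloring_def preserves_def using E0 by auto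
    ultimately show ?thesis unfolding CC_def using km0 by blast
  qed
  show ?thesis using A B by auto
qed

lemma finite_Pairs: "finite (V P) \<Longrightarrow> finite (Pairs P)"
proof -
  assume f: "finite (V P)"
  have "Pairs P \<subseteq> Pow (V P) \<times> Pow (V P)" unfolding Pairs_def sinks_def srcs_def by auto
  moreover have "finite (Pow (V P) \<times> Pow (V P))" using f by simp
  ultimately show ?thesis by (rule finite_subset)
qed

lemma sum_decomp:
  assumes ori: "is_orientation P"
  shows "sum h (CC P) = (if E P = {} then h (zero P) else 0) +
    (\<Sum>p\<in>Pairs P. \<Sum>\<kappa>'\<in>CC (sub P (V P - fst p - snd p)). h (ext P (fst p) (snd p) \<kappa>'))"
proof -
  have finV: "finite (V P)" using ori unfolding is_orientation_def by auto
  define F where "F p = ext P (fst p) (snd p) ` CC (sub P (V P - fst p - snd p))" for p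
  have fin: "finite (CC P)" using finite_CC[OF finV] .
  have split: "sum h (CC P) = sum h {\<kappa> \<in> CC P. km (V P) \<kappa> = 0} + sum h {\<kappa> \<in> CC P. km (V P) \<kappa> \<noteq> 0}"
  proof -
    have "sum h (CC P) = sum h ({\<kappa> \<in> CC P. km (V P) \<kappa> = 0} \<union> {\<kappa> \<in> CC P. km (V P) \<kappa> \<noteq> 0})"
      by (rule arg_cong[where f="sum h"]) auto
    also have "\<dots> = sum h {\<kappa> \<in> CC P. km (V P) \<kappa> = 0} + sum h {\<kappa> \<in> CC P. km (V P) \<kappa> \<noteq> 0}"
      by (rule sum.union_disjoint) (use fin in auto)
    finally show ?thesis .
  qed
  have s0: "sum h {\<kappa> \<in> CC P. km (V P) \<kappa> = 0} = (if E P = {} then h (zero P) else 0)"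
    unfolding zero_part[OF ori] by simp
  have U: "{\<kappa> \<in> CC P. km (V P) \<kappa> \<noteq> 0} = (\<Union>p\<in>Pairs P. F p)"
  proof (intro set_eqI iffI)
    fix \<kappa> assume k: "\<kappa> \<in> {\<kappa> \<in> CC P. km (V P) \<kappa> \<noteq> 0}"
    then have kC: "\<kappa> \<in> CC P" and kp: "km (V P) \<kappa> > 0" using km_nonneg[OF finV, of \<kappa>] by auto
    note t = top_props[OF ori kC kp]
    show "\<kappa> \<in> (\<Union>p\<in>Pairs P. F p)"
      unfolding F_def using t by (intro UN_I[OF t(1)]) (simp, metis image_eqI)
  next
    fix \<kappa> assume "\<kappa> \<in> (\<Union>p\<in>Pairs P. F p)"
    then obtain B1 B2 \<kappa>' where p: "(B1,B2) \<in> Pairs P" and k': "\<kappa>' \<in> CC (sub P (V P - B1 - B2))"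
      and k: "\<kappa> = ext P B1 B2 \<kappa>'" unfolding F_def by auto
    note t = ext_props[OF ori p k']
    have "finite (V P - B1 - B2)" using finV by simp
    then show "\<kappa> \<in> {\<kappa> \<in> CC P. km (V P) \<kappa> \<noteq> 0}" using t k km_nonneg[of "V P - B1 - B2" \<kappa>'] by auto
  qed
  have disj: "F p \<inter> F q = {}" if "p \<in> Pairs P" "q \<in> Pairs P" "p \<noteq> q" for p q
  proof (rule ccontr)
    assume "F p \<inter> F q \<noteq> {}"
    then obtain \<kappa> where kp: "\<kappa> \<in> F p" and kq: "\<kappa> \<in> F q" by blast
    obtain a b where pq: "p = (a,b)" by (cases p)
    obtain c d where qq: "q = (c,d)" by (cases q)
    from kp obtain \<kappa>1 where 1: "\<kappa>1 \<in> CC (sub P (V P - a - b))" "\<kappa> = ext P a b \<kappa>1" unfolding F_def pq by auto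
    from kq obtain \<kappa>2 where 2: "\<kappa>2 \<in> CC (sub P (V P - c - d))" "\<kappa> = ext P c d \<kappa>2" unfolding F_def qq by auto
    have "Bp P \<kappa> = a" "Bm P \<kappa> = b" using ext_props[OF ori that(1)[unfolded pq] 1(1)] 1(2) by auto
    moreover have "Bp P \<kappa> = c" "Bm P \<kappa> = d" using ext_props[OF ori that(2)[unfolded qq] 2(1)] 2(2) by auto
    ultimately show False using that(3) pq qq by simp
  qed
  have sU: "sum h (\<Union>p\<in>Pairs P. F p) = (\<Sum>p\<in>Pairs P. sum h (F p))"
  proof (rule sum.UNION_disjoint)
    show "finite (Pairs P)" using finite_Pairs[OF finV] .
    show "\<forall>p\<in>Pairs P. finite (F p)" unfolding F_def using finV by (auto intro!: finite_CC)
    show "\<forall>p\<in>Pairs P. \<forall>q\<in>Pairs P. p \<noteq> q \<longrightarrow> F p \<inter> F q = {}" using disj by blast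
  qed
  have sF: "sum h (F p) = (\<Sum>\<kappa>'\<in>CC (sub P (V P - fst p - snd p)). h (ext P (fst p) (snd p) \<kappa>'))"
    if p: "p \<in> Pairs P" for p
  proof -
    obtain a b where pq: "p = (a,b)" by (cases p)
    have "inj_on (ext P a b) (CC (sub P (V P - a - b)))"
    proof (rule inj_onI)
      fix x y assume x: "x \<in> CC (sub P (V P - a - b))" and y: "y \<in> CC (sub P (V P - a - b))"
        and xy: "ext P a b x = ext P a b y"
      have "x = restrict (ext P a b x) (V P - a - b)" using ext_props(5)[OF ori p[unfolded pq] x] by simp
      also have "\<dots> = restrict (ext P a b y) (V P - a - b)" using xy by simp
      also have "\<dots> = y" using ext_props(5)[OF ori p[unfolded pq] y] by simp
      finally show "x = y" .
    qed
    then show ?thesis unfolding F_def pq by (simp add: sum.reindex)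
  qed
  show ?thesis unfolding split s0 U sU using sF by simp
qed

lemma pow_sum:
  fixes x :: "'a :: comm_semiring_1"
  assumes "finite X"
  shows "(\<Sum>A\<in>Pow X. x ^ card A) = (1 + x) ^ card X"
  using assms
proof (induction X rule: finite_induct)
  case empty then show ?case by simp
next
  case (insert a X)
  have "Pow (insert a X) = Pow X \<union> insert a ` Pow X" by (rule Pow_insert)
  moreover have "Pow X \<inter> insert a ` Pow X = {}" using insert(2) by auto
  moreover have "inj_on (insert a) (Pow X)" using insert(2) unfolding inj_on_def
    by (metis Diff_insert_absorb PowD subsetD)
  moreover have "card (insert a A) = Suc (card A)" if "A \<in> Pow X" for A
    using that insert(1,2) finite_subset by (metis PowD card_insert_disjoint in_mono)
  ultimately have "(\<Sum>A\<in>Pow (insert a X). x ^ card A) = (\<Sum>A\<in>Pow X. x ^ card A) + (\<Sum>A\<in>Pow X. x ^ Suc (card A))"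
    using insert(1) by (simp add: sum.union_disjoint sum.reindex)
  also have "\<dots> = (1 + x) * (\<Sum>A\<in>Pow X. x ^ card A)"
    by (simp add: sum_distrib_left algebra_simps sum.distrib)
  finally show ?case using insert by simp
qed

lemma comb:
  fixes S T :: "nat set"
  assumes fS: "finite S" and fT: "finite T"
  shows "(\<Sum>p\<in>{(B1,B2). B1 \<subseteq> S \<and> B2 \<subseteq> T \<and> B1 \<inter> B2 = {}}. (-1::'a::comm_ring_1) ^ (card (fst p) + card (snd p)))
    = (if T \<subseteq> S then (-1) ^ card T * 0 ^ card (S - T) else 0)"
proof -
  have set: "{(B1,B2). B1 \<subseteq> S \<and> B2 \<subseteq> T \<and> B1 \<inter> B2 = {}} = Sigma (Pow S) (\<lambda>B1. Pow (T - B1))" by auto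
  have "(\<Sum>p\<in>Sigma (Pow S) (\<lambda>B1. Pow (T - B1)). (-1::'a) ^ (card (fst p) + card (snd p)))
      = (\<Sum>B1\<in>Pow S. \<Sum>B2\<in>Pow (T - B1). (-1::'a) ^ (card B1 + card B2))"
    apply (subst sum.Sigma)
    using fS fT apply auto[2]
    apply (simp add: split_beta)
    done
  also have "\<dots> = (\<Sum>B1\<in>Pow S. (-1) ^ card B1 * 0 ^ card (T - B1))"
  proof (rule sum.cong[OF refl])
    fix B1 assume "B1 \<in> Pow S"
    have "(\<Sum>B2\<in>Pow (T - B1). (-1::'a) ^ (card B1 + card B2)) = (-1) ^ card B1 * (\<Sum>B2\<in>Pow (T - B1). (-1) ^ card B2)"
      by (simp add: power_add sum_distrib_left)
    also have "\<dots> = (-1) ^ card B1 * 0 ^ card (T - B1)" using pow_sum[of "T - B1" "-1::'a"] fT by simp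
    finally show "(\<Sum>B2\<in>Pow (T - B1). (-1::'a) ^ (card B1 + card B2)) = (-1) ^ card B1 * 0 ^ card (T - B1)" .
  qed
  also have "\<dots> = (\<Sum>B1\<in>Pow S. if T \<subseteq> B1 then (-1) ^ card B1 else 0)"
  proof (rule sum.cong[OF refl])
    fix B1 assume "B1 \<in> Pow S"
    have "card (T - B1) = 0 \<longleftrightarrow> T \<subseteq> B1" using fT by auto
    then show "(-1::'a) ^ card B1 * 0 ^ card (T - B1) = (if T \<subseteq> B1 then (-1) ^ card B1 else 0)"
      by (auto simp: zero_power)
  qed
  also have "\<dots> = (\<Sum>B1\<in>{B1 \<in> Pow S. T \<subseteq> B1}. (-1) ^ card B1)"
    using fS by (simp add: sum.inter_filter[symmetric] Pow_def)
  also have "\<dots> = (if T \<subseteq> S then (-1) ^ card T * 0 ^ card (S - T) else 0)"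
  proof (cases "T \<subseteq> S")
    case False
    then have em: "{B1 \<in> Pow S. T \<subseteq> B1} = {}" by auto
    show ?thesis using False unfolding em by simp
  next
    case True
    have img: "{B1 \<in> Pow S. T \<subseteq> B1} = (\<lambda>C. T \<union> C) ` Pow (S - T)" using True by auto
    have inj: "inj_on (\<lambda>C. T \<union> C) (Pow (S - T))" unfolding inj_on_def by auto
    have cd: "card (T \<union> C) = card T + card C" if "C \<in> Pow (S - T)" for C
      using that fT fS by (intro card_Un_disjoint) (auto intro: finite_subset)
    have "(\<Sum>B1\<in>{B1 \<in> Pow S. T \<subseteq> B1}. (-1::'a) ^ card B1) = (\<Sum>C\<in>Pow (S - T). (-1) ^ card (T \<union> C))"
      unfolding img using inj by (simp add: sum.reindex)
    also have "\<dots> = (\<Sum>C\<in>Pow (S - T). (-1) ^ card T * (-1) ^ card C)"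
      using cd by (intro sum.cong) (auto simp: power_add)
    also have "\<dots> = (-1) ^ card T * 0 ^ card (S - T)"
      using pow_sum[of "S - T" "-1::'a"] fS by (simp add: sum_distrib_left[symmetric])
    finally show ?thesis using True by simp
  qed
  finally show ?thesis unfolding set .
qed

lemma sinks_sub_V: "sinks P \<subseteq> V P" and srcs_sub_V: "srcs P \<subseteq> V P"
  unfolding sinks_def srcs_def by auto

lemma pairs_card:
  assumes ori: "is_orientation P" and p: "(B1,B2) \<in> Pairs P"
  shows "card (V P) = card (V P - B1 - B2) + card B1 + card B2" "card (V P - B1 - B2) < card (V P)"
    "V P - B1 - B2 \<subseteq> V P"
proof -
  have finV: "finite (V P)" using ori unfolding is_orientation_def by auto
  have B0: "B1 \<subseteq> sinks P" "B2 \<subseteq> srcs P" "B1 \<inter> B2 = {}" "B1 \<union> B2 \<noteq> {}"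
    using p unfolding Pairs_def by auto
  have B: "B1 \<subseteq> V P" "B2 \<subseteq> V P" "B1 \<inter> B2 = {}" "B1 \<union> B2 \<noteq> {}"
    using B0 sinks_sub_V[of P] srcs_sub_V[of P] by blast+
  have "V P = (V P - B1 - B2) \<union> B1 \<union> B2" using B by auto
  moreover have "card ((V P - B1 - B2) \<union> B1 \<union> B2) = card (V P - B1 - B2) + card B1 + card B2"
  proof -
    have f: "finite (V P - B1 - B2)" "finite B1" "finite B2" using finV B(1,2) by (auto intro: finite_subset)
    have "card ((V P - B1 - B2) \<union> B1 \<union> B2) = card ((V P - B1 - B2) \<union> B1) + card B2"
      by (rule card_Un_disjoint) (use f B(3) in auto)
    also have "card ((V P - B1 - B2) \<union> B1) = card (V P - B1 - B2) + card B1"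
      by (rule card_Un_disjoint) (use f in auto)
    finally show ?thesis .
  qed
  ultimately show c: "card (V P) = card (V P - B1 - B2) + card B1 + card B2" by simp
  have fB: "finite B1" "finite B2" using finV B(1,2) by (auto intro: finite_subset)
  have "card B1 + card B2 > 0"
  proof (rule ccontr)
    assume "\<not> card B1 + card B2 > 0"
    then have "card B1 = 0" "card B2 = 0" by auto
    then have "B1 = {}" "B2 = {}" using fB by auto
    then show False using B(4) by simp
  qed
  then show "card (V P - B1 - B2) < card (V P)" using c by simp
  show "V P - B1 - B2 \<subseteq> V P" by auto
qed

theorem eps:
  assumes sp: "signed_poset P"
  shows "(\<Sum>\<kappa>\<in>CC P. (-1::'a::comm_ring_1) ^ (card (V P) + nat (km (V P) \<kappa>))) = 1"
  using sp
proof (induction "card (V P)" arbitrary: P rule: less_induct)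
  case less
  have ori: "is_orientation P" using less.prems unfolding signed_poset_def by auto
  have finV: "finite (V P)" using ori unfolding is_orientation_def by auto
  define S where "S = sinks P"
  define T where "T = srcs P"
  have fS: "finite S" using finite_subset[OF sinks_sub_V finV] unfolding S_def .
  have fT: "finite T" using finite_subset[OF srcs_sub_V finV] unfolding T_def .
  let ?h = "\<lambda>\<kappa>. (-1::'a) ^ (card (V P) + nat (km (V P) \<kappa>))"
  have inner: "(\<Sum>\<kappa>'\<in>CC (sub P (V P - fst p - snd p)). ?h (ext P (fst p) (snd p) \<kappa>'))
      = - ((-1) ^ (card (fst p) + card (snd p)))" if p: "p \<in> Pairs P" for p
  proof -
    obtain B1 B2 where pq: "p = (B1,B2)" by (cases p)
    define R where "R = V P - B1 - B2"
    note pc = pairs_card[OF ori p[unfolded pq]]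
    have finR: "finite R" using finV unfolding R_def by simp
    have "?h (ext P B1 B2 \<kappa>') = - ((-1) ^ (card B1 + card B2)) * (-1) ^ (card R + nat (km R \<kappa>'))"
      if k': "\<kappa>' \<in> CC (sub P R)" for \<kappa>'
    proof -
      have "km (V P) (ext P B1 B2 \<kappa>') = km R \<kappa>' + 1" using ext_props(2)[OF ori p[unfolded pq] k'[unfolded R_def]]
        unfolding R_def .
      then have "nat (km (V P) (ext P B1 B2 \<kappa>')) = Suc (nat (km R \<kappa>'))" using km_nonneg[OF finR, of \<kappa>'] by simp
      then show ?thesis using pc(1) unfolding R_def[symmetric] by (simp add: power_add algebra_simps)
    qed
    then have "(\<Sum>\<kappa>'\<in>CC (sub P R). ?h (ext P B1 B2 \<kappa>'))
        = - ((-1) ^ (card B1 + card B2)) * (\<Sum>\<kappa>'\<in>CC (sub P R). (-1::'a) ^ (card R + nat (km R \<kappa>')))"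
      by (simp add: sum_distrib_left)
    also have "(\<Sum>\<kappa>'\<in>CC (sub P R). (-1::'a) ^ (card R + nat (km R \<kappa>'))) = 1"
      using less.hyps[of "sub P R"] pc(2,3) sub_sp[OF less.prems, of R] unfolding R_def by simp
    finally show ?thesis unfolding pq R_def by simp
  qed
  define AP where "AP = {(B1,B2). B1 \<subseteq> S \<and> B2 \<subseteq> T \<and> B1 \<inter> B2 = {}}"
  have PAP: "Pairs P = AP - {({},{})}" unfolding Pairs_def AP_def S_def T_def by auto
  have finAP: "finite AP"
  proof -
    have "AP \<subseteq> Pow S \<times> Pow T" unfolding AP_def by auto
    moreover have "finite (Pow S \<times> Pow T)" using fS fT by simp
    ultimately show ?thesis by (rule finite_subset)
  qed
  have sumP: "(\<Sum>p\<in>Pairs P. (-1::'a) ^ (card (fst p) + card (snd p)))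
     = (if T \<subseteq> S then (-1) ^ card T * 0 ^ card (S - T) else 0) - 1"
  proof -
    have "(\<Sum>p\<in>AP. (-1::'a) ^ (card (fst p) + card (snd p))) = 1 + (\<Sum>p\<in>Pairs P. (-1::'a) ^ (card (fst p) + card (snd p)))"
      unfolding PAP using finAP by (subst sum.remove[of AP "({},{})"]) (auto simp: AP_def)
    moreover have "(\<Sum>p\<in>AP. (-1::'a) ^ (card (fst p) + card (snd p))) = (if T \<subseteq> S then (-1) ^ card T * 0 ^ card (S - T) else 0)"
      unfolding AP_def by (rule comb[OF fS fT])
    ultimately show ?thesis by (simp add: algebra_simps)
  qed
  have key: "(if E P = {} then (-1::'a) ^ card (V P) else 0) = (if T \<subseteq> S then (-1) ^ card T * 0 ^ card (S - T) else 0)"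
  proof (cases "E P = {}")
    case True
    then have "S = V P" "T = V P" unfolding S_def T_def sinks_def srcs_def by auto
    then show ?thesis using True by simp
  next
    case False
    then obtain e0 where "e0 \<in> E P" by blast
    from exists_ss[OF less.prems this] obtain e b where e: "e \<in> E P" and v: "ends P e b \<in> S \<or> ends P e b \<in> T"
      unfolding S_def T_def by blast
    have "\<not> (ends P e b \<in> S \<and> ends P e b \<in> T)" using e unfolding S_def T_def sinks_def srcs_def by blast
    then have "ends P e b \<in> S - T \<or> ends P e b \<in> T - S" using v by blast
    moreover have "card (S - T) \<noteq> 0" if "ends P e b \<in> S - T" using that fS by auto
    ultimately have "(if T \<subseteq> S then (-1::'a) ^ card T * 0 ^ card (S - T) else 0) = 0"
      by (auto simp: zero_power)
    then show ?thesis using False by simp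
  qed
  have "(\<Sum>\<kappa>\<in>CC P. ?h \<kappa>) = (if E P = {} then ?h (zero P) else 0) +
      (\<Sum>p\<in>Pairs P. - ((-1) ^ (card (fst p) + card (snd p))))"
    unfolding sum_decomp[OF ori, of ?h] using inner by simp
  also have "(if E P = {} then ?h (zero P) else 0) = (if E P = {} then (-1::'a) ^ card (V P) else 0)"
  proof (cases "E P = {}")
    case True
    then have "zero P \<in> {\<kappa> \<in> CC P. km (V P) \<kappa> = 0}" unfolding zero_part[OF ori] by simp
    then show ?thesis using True by simp
  qed simp
  also have "(\<Sum>p\<in>Pairs P. - ((-1::'a) ^ (card (fst p) + card (snd p)))) = - (\<Sum>p\<in>Pairs P. (-1::'a) ^ (card (fst p) + card (snd p)))"
    by (simp add: sum_negf)
  finally show ?case unfolding sumP key by simp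
qed

definition Lp :: "sposet \<Rightarrow> (nat \<Rightarrow> int) \<Rightarrow> rat poly" where
  "Lp P \<kappa> = (if km (V P) \<kappa> \<ge> 1 \<and> Bm P \<kappa> = {} then
     (-1) ^ (card (V P) + card (Bp P \<kappa>) + nat (km (V P) \<kappa>) + 1) * (monom 1 1 - 1) ^ card (Bp P \<kappa>) else 0)"

theorem Lsum:
  assumes sp: "signed_poset P"
  shows "(\<Sum>\<kappa>\<in>CC P. Lp P \<kappa>) = monom 1 1 ^ card (sinks P) - 1"
proof -
  have ori: "is_orientation P" using sp unfolding signed_poset_def by auto
  have finV: "finite (V P)" using ori unfolding is_orientation_def by auto
  define S where "S = sinks P"
  have fS: "finite S" using finite_subset[OF sinks_sub_V finV] unfolding S_def .
  define q :: "rat poly" where "q = monom 1 1 - 1"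
  have inner: "(\<Sum>\<kappa>'\<in>CC (sub P (V P - fst p - snd p)). Lp P (ext P (fst p) (snd p) \<kappa>'))
      = (if snd p = {} then q ^ card (fst p) else 0)" if p: "p \<in> Pairs P" for p
  proof -
    obtain B1 B2 where pq: "p = (B1,B2)" by (cases p)
    define R where "R = V P - B1 - B2"
    note pc = pairs_card[OF ori p[unfolded pq]]
    have finR: "finite R" using finV unfolding R_def by simp
    have "Lp P (ext P B1 B2 \<kappa>') = (if B2 = {} then q ^ card B1 * (-1) ^ (card R + nat (km R \<kappa>')) else 0)"
      if k': "\<kappa>' \<in> CC (sub P R)" for \<kappa>'
    proof -
      note ep = ext_props[OF ori p[unfolded pq] k'[unfolded R_def]]
      have km: "km (V P) (ext P B1 B2 \<kappa>') = km R \<kappa>' + 1" using ep(2) unfolding R_def .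
      have nk: "nat (km (V P) (ext P B1 B2 \<kappa>')) = Suc (nat (km R \<kappa>'))" using km km_nonneg[OF finR, of \<kappa>'] by simp
      have ge: "km (V P) (ext P B1 B2 \<kappa>') \<ge> 1" using km km_nonneg[OF finR, of \<kappa>'] by simp
      show ?thesis
      proof (cases "B2 = {}")
        case True
        have cV: "card (V P) = card R + card B1" using pc(1) True unfolding R_def by simp
        have "(-1::rat poly) ^ (card (V P) + card B1 + nat (km (V P) (ext P B1 B2 \<kappa>')) + 1)
            = (-1) ^ (card R + nat (km R \<kappa>')) * ((-1) ^ card B1 * (-1) ^ card B1) * ((-1) * (-1))"
          unfolding cV nk by (simp add: power_add algebra_simps)
        also have "\<dots> = (-1) ^ (card R + nat (km R \<kappa>'))"
          by (simp add: power_add[symmetric])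
        finally show ?thesis unfolding Lp_def ep(3) ep(4) using True ge by (simp add: q_def)
      next
        case False
        then show ?thesis unfolding Lp_def ep(4) by simp
      qed
    qed
    then have "(\<Sum>\<kappa>'\<in>CC (sub P R). Lp P (ext P B1 B2 \<kappa>'))
        = (if B2 = {} then q ^ card B1 * (\<Sum>\<kappa>'\<in>CC (sub P R). (-1::rat poly) ^ (card R + nat (km R \<kappa>'))) else 0)"
      by (simp add: sum_distrib_left)
    also have "(\<Sum>\<kappa>'\<in>CC (sub P R). (-1::rat poly) ^ (card R + nat (km R \<kappa>'))) = 1"
      using eps[of "sub P R"] sub_sp[OF sp pc(3)] unfolding R_def by simp
    finally show ?thesis unfolding pq R_def by simp
  qed
  have z: "(if E P = {} then Lp P (zero P) else 0) = 0"
  proof (cases "E P = {}")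
    case True
    then have "zero P \<in> {\<kappa> \<in> CC P. km (V P) \<kappa> = 0}" unfolding zero_part[OF ori] by simp
    then show ?thesis unfolding Lp_def by simp
  qed simp
  have "(\<Sum>\<kappa>\<in>CC P. Lp P \<kappa>) = (\<Sum>p\<in>Pairs P. if snd p = {} then q ^ card (fst p) else 0)"
    unfolding sum_decomp[OF ori, of "Lp P"] z using inner by simp
  also have "\<dots> = (\<Sum>p\<in>{p \<in> Pairs P. snd p = {}}. q ^ card (fst p))"
    using finite_Pairs[OF finV] by (simp add: sum.inter_filter)
  also have "{p \<in> Pairs P. snd p = {}} = (\<lambda>B. (B, {})) ` (Pow S - {{}})"
    unfolding Pairs_def S_def by auto
  also have "(\<Sum>p\<in>(\<lambda>B. (B, {})) ` (Pow S - {{}}). q ^ card (fst p)) = (\<Sum>B\<in>Pow S - {{}}. q ^ card B)"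
    by (subst sum.reindex) (auto simp: inj_on_def)
  also have "\<dots> = (\<Sum>B\<in>Pow S. q ^ card B) - 1"
    using fS by (simp add: sum.remove[of "Pow S" "{}"] algebra_simps)
  also have "(\<Sum>B\<in>Pow S. q ^ card B) = (1 + q) ^ card S" using pow_sum[OF fS] .
  finally show ?thesis unfolding q_def S_def by simp
qed

definition kM :: "int multiset \<Rightarrow> int" where
  "kM m = Max (insert 0 (abs ` set_mset m))"

definition canonm :: "int multiset \<Rightarrow> bool" where
  "canonm m \<longleftrightarrow> abs ` set_mset m - {0} = {1..kM m}"

definition lam :: "int multiset \<Rightarrow> rat poly" where
  "lam m = (-1) ^ (size m + nat (kM m)) +
     (if kM m \<ge> 1 \<and> count m (- kM m) = 0 then
        (-1) ^ (size m + count m (kM m) + nat (kM m) + 1) * (monom 1 1 - 1) ^ count m (kM m) else 0)"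

definition Lf :: "fps_Z \<Rightarrow> rat poly" where
  "Lf f = (\<Sum>m\<in>{m. canonm m \<and> f m \<noteq> 0}. smult (f m) (lam m))"

definition fsup :: "fps_Z \<Rightarrow> bool" where
  "fsup f \<longleftrightarrow> finite {m. canonm m \<and> f m \<noteq> 0}"

definition img :: "sposet \<Rightarrow> (nat \<Rightarrow> int) \<Rightarrow> int multiset" where
  "img P \<kappa> = image_mset \<kappa> (mset_set (V P))"

lemma smult_sum_right: "smult c (sum f A) = (\<Sum>x\<in>A. smult c (f x))"
  by (induct A rule: infinite_finite_induct) (simp_all add: smult_add_right)

lemma smult_of_nat: "smult (of_nat k) p = of_nat k * p"
  by (induct k) (simp_all add: smult_add_left algebra_simps)

lemma Lf_eq:
  assumes "finite F" "{m. canonm m \<and> f m \<noteq> 0} \<subseteq> F"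
  shows "Lf f = (\<Sum>m\<in>{m \<in> F. canonm m}. smult (f m) (lam m))"
  unfolding Lf_def
  by (rule sum.mono_neutral_left) (use assms in auto)

lemma img_props:
  assumes fin: "finite (V P)"
  shows "set_mset (img P \<kappa>) = \<kappa> ` V P" "size (img P \<kappa>) = card (V P)"
    "count (img P \<kappa>) x = card {v \<in> V P. \<kappa> v = x}"
    "kM (img P \<kappa>) = km (V P) \<kappa>" "canonm (img P \<kappa>) \<longleftrightarrow> canon (V P) \<kappa>"
proof -
  show s: "set_mset (img P \<kappa>) = \<kappa> ` V P" unfolding img_def using fin by simp
  show "size (img P \<kappa>) = card (V P)" unfolding img_def by simp
  show "count (img P \<kappa>) x = card {v \<in> V P. \<kappa> v = x}"
  proof -
    have "count (img P \<kappa>) x = (\<Sum>v | v \<in># mset_set (V P) \<and> x = \<kappa> v. count (mset_set (V P)) v)"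
      unfolding img_def by (rule count_image_mset')
    also have "\<dots> = (\<Sum>v\<in>{v \<in> V P. \<kappa> v = x}. 1)"
      using fin by (intro sum.cong) auto
    finally show ?thesis by simp
  qed
  have a: "abs ` set_mset (img P \<kappa>) = (\<lambda>v. \<bar>\<kappa> v\<bar>) ` V P" unfolding s by (simp add: image_image)
  show k: "kM (img P \<kappa>) = km (V P) \<kappa>" unfolding kM_def km_def a ..
  show "canonm (img P \<kappa>) \<longleftrightarrow> canon (V P) \<kappa>" unfolding canonm_def canon_def a k ..
qed

lemma lam_img:
  assumes fin: "finite (V P)"
  shows "lam (img P \<kappa>) = (-1) ^ (card (V P) + nat (km (V P) \<kappa>)) + Lp P \<kappa>"
proof -
  note ip = img_props[OF fin, of \<kappa>]
  have cp: "count (img P \<kappa>) (km (V P) \<kappa>) = card (Bp P \<kappa>)" unfolding ip(3) Bp_def ..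
  have cm: "count (img P \<kappa>) (- km (V P) \<kappa>) = 0 \<longleftrightarrow> Bm P \<kappa> = {}"
    unfolding ip(3) Bm_def using fin by simp
  show ?thesis unfolding lam_def Lp_def ip(2) ip(4) cp cm ..
qed

lemma Ypos_canon:
  assumes fin: "finite (V P)" and c: "canonm m"
  shows "Ypos P m = of_nat (card {\<kappa> \<in> CC P. img P \<kappa> = m})"
proof -
  have "{\<kappa> \<in> V P \<rightarrow>\<^sub>E (UNIV :: int set). proper_coloring P \<kappa> \<and> preserves P \<kappa> \<and> image_mset \<kappa> (mset_set (V P)) = m}
     = {\<kappa> \<in> CC P. img P \<kappa> = m}"
    unfolding CC_def using c img_props(5)[OF fin] unfolding img_def by blast
  then show ?thesis unfolding Ypos_def by simp
qed

lemma Ypos_supp: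
  assumes fin: "finite (V P)"
  shows "{m. canonm m \<and> Ypos P m \<noteq> 0} = img P ` CC P"
proof (intro set_eqI iffI)
  fix m assume "m \<in> {m. canonm m \<and> Ypos P m \<noteq> 0}"
  then have c: "canonm m" and y: "Ypos P m \<noteq> 0" by auto
  then have "card {\<kappa> \<in> CC P. img P \<kappa> = m} \<noteq> 0" using Ypos_canon[OF fin c] by simp
  then obtain \<kappa> where "\<kappa> \<in> CC P" "img P \<kappa> = m" by (metis (mono_tags, lifting) Collect_empty_eq card.empty)
  then show "m \<in> img P ` CC P" by blast
next
  fix m assume "m \<in> img P ` CC P"
  then obtain \<kappa> where k: "\<kappa> \<in> CC P" "m = img P \<kappa>" by blast
  have c: "canonm m" using k img_props(5)[OF fin] unfolding CC_def by auto
  have "finite {\<kappa> \<in> CC P. img P \<kappa> = m}" using finite_CC[OF fin] by simp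
  moreover have "\<kappa> \<in> {\<kappa> \<in> CC P. img P \<kappa> = m}" using k by simp
  ultimately have "card {\<kappa> \<in> CC P. img P \<kappa> = m} \<noteq> 0" by (metis card_0_eq empty_iff)
  then show "m \<in> {m. canonm m \<and> Ypos P m \<noteq> 0}" using c Ypos_canon[OF fin c] by simp
qed

lemma Lf_Ypos:
  assumes sp: "signed_poset P"
  shows "Lf (Ypos P) = monom 1 (card (sinks P))" "fsup (Ypos P)"
proof -
  have ori: "is_orientation P" using sp unfolding signed_poset_def by auto
  have fin: "finite (V P)" using ori unfolding is_orientation_def by auto
  have fC: "finite (CC P)" using finite_CC[OF fin] .
  show "fsup (Ypos P)" unfolding fsup_def Ypos_supp[OF fin] using fC by simp
  have "Lf (Ypos P) = (\<Sum>m\<in>img P ` CC P. smult (Ypos P m) (lam m))"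
    unfolding Lf_def Ypos_supp[OF fin] ..
  also have "\<dots> = (\<Sum>m\<in>img P ` CC P. \<Sum>\<kappa>\<in>{\<kappa> \<in> CC P. img P \<kappa> = m}. lam (img P \<kappa>))"
  proof (rule sum.cong[OF refl])
    fix m assume "m \<in> img P ` CC P"
    then have c: "canonm m" using Ypos_supp[OF fin] by blast
    have "(\<Sum>\<kappa>\<in>{\<kappa> \<in> CC P. img P \<kappa> = m}. lam (img P \<kappa>)) = (\<Sum>\<kappa>\<in>{\<kappa> \<in> CC P. img P \<kappa> = m}. lam m)"
      by (rule sum.cong) auto
    also have "\<dots> = of_nat (card {\<kappa> \<in> CC P. img P \<kappa> = m}) * lam m" by simp
    finally show "smult (Ypos P m) (lam m) = (\<Sum>\<kappa>\<in>{\<kappa> \<in> CC P. img P \<kappa> = m}. lam (img P \<kappa>))"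
      unfolding Ypos_canon[OF fin c] smult_of_nat[where 'a=rat] by simp
  qed
  also have "\<dots> = (\<Sum>\<kappa>\<in>CC P. lam (img P \<kappa>))"
    by (rule sum.group) (use fC in auto)
  also have "\<dots> = (\<Sum>\<kappa>\<in>CC P. (-1) ^ (card (V P) + nat (km (V P) \<kappa>))) + (\<Sum>\<kappa>\<in>CC P. Lp P \<kappa>)"
    unfolding lam_img[OF fin] sum.distrib ..
  also have "\<dots> = monom 1 1 ^ card (sinks P)" unfolding eps[OF sp] Lsum[OF sp] by simp
  also have "\<dots> = monom 1 (card (sinks P))" by (simp add: monom_power)
  finally show "Lf (Ypos P) = monom 1 (card (sinks P))" .
qed

lemma lin:
  assumes "\<forall>(c,P)\<in>set rs. signed_poset P"
  shows "fsup (\<lambda>m. \<Sum>(c,P)\<leftarrow>rs. c * Ypos P m) \<and>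
    Lf (\<lambda>m. \<Sum>(c,P)\<leftarrow>rs. c * Ypos P m) = (\<Sum>(c,P)\<leftarrow>rs. smult c (monom 1 (card (sinks P))))"
  using assms
proof (induction rs)
  case Nil
  then show ?case unfolding fsup_def Lf_def by simp
next
  case (Cons a rs)
  obtain c P where a: "a = (c,P)" by (cases a)
  have sp: "signed_poset P" using Cons.prems a by auto
  define g where "g = (\<lambda>m. \<Sum>(c,P)\<leftarrow>rs. c * Ypos P m)"
  have IH: "fsup g" "Lf g = (\<Sum>(c,P)\<leftarrow>rs. smult c (monom 1 (card (sinks P))))"
    using Cons unfolding g_def by auto
  note Y = Lf_Ypos[OF sp]
  define f where "f = (\<lambda>m. c * Ypos P m + g m)"
  have feq: "(\<lambda>m. \<Sum>(c,P)\<leftarrow>a # rs. c * Ypos P m) = f" unfolding f_def g_def a by simp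
  define F where "F = {m. canonm m \<and> Ypos P m \<noteq> 0} \<union> {m. canonm m \<and> g m \<noteq> 0}"
  have fF: "finite F" using Y(2) IH(1) unfolding F_def fsup_def by simp
  have sf: "{m. canonm m \<and> f m \<noteq> 0} \<subseteq> F" unfolding F_def f_def by auto
  have "Lf f = (\<Sum>m\<in>{m \<in> F. canonm m}. smult (f m) (lam m))" by (rule Lf_eq[OF fF sf])
  also have "\<dots> = smult c (\<Sum>m\<in>{m \<in> F. canonm m}. smult (Ypos P m) (lam m)) + (\<Sum>m\<in>{m \<in> F. canonm m}. smult (g m) (lam m))"
    unfolding f_def smult_add_left sum.distrib smult_sum_right by simp
  also have "(\<Sum>m\<in>{m \<in> F. canonm m}. smult (Ypos P m) (lam m)) = Lf (Ypos P)"
    by (rule Lf_eq[symmetric]) (use fF in \<open>auto simp: F_def\<close>)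
  also have "(\<Sum>m\<in>{m \<in> F. canonm m}. smult (g m) (lam m)) = Lf g"
    by (rule Lf_eq[symmetric]) (use fF in \<open>auto simp: F_def\<close>)
  finally have "Lf f = smult c (monom 1 (card (sinks P))) + (\<Sum>(c,P)\<leftarrow>rs. smult c (monom 1 (card (sinks P))))"
    unfolding Y(1) IH(2) .
  moreover have "fsup f" unfolding fsup_def using finite_subset[OF sf fF] .
  ultimately show ?case unfolding a by (simp add: f_def g_def)
qed

definition chainP :: "nat \<Rightarrow> sposet" where
  "chainP n = \<lparr>V = {..<n}, E = {e. fst (prod_decode e) < snd (prod_decode e) \<and> snd (prod_decode e) < n},
     ends = (\<lambda>e b. if b then snd (prod_decode e) else fst (prod_decode e)), pos = (\<lambda>_. True), arr = (\<lambda>e b. b)\<rparr>"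

lemma chain_simps [simp]: "V (chainP n) = {..<n}"
  "E (chainP n) = {e. fst (prod_decode e) < snd (prod_decode e) \<and> snd (prod_decode e) < n}"
  "ends (chainP n) e b = (if b then snd (prod_decode e) else fst (prod_decode e))"
  "pos (chainP n) e = True" "arr (chainP n) e b = b"
  by (simp_all add: chainP_def)

lemma sgnval_chain [simp]: "sgnval (chainP n) e = 1" by (simp add: sgnval_def)

lemma chain_sp: "signed_poset (chainP n)"
proof -
  have "E (chainP n) \<subseteq> prod_encode ` ({..<n} \<times> {..<n})"
  proof
    fix e assume "e \<in> E (chainP n)"
    then have "prod_decode e \<in> {..<n} \<times> {..<n}" by (cases "prod_decode e") auto
    then show "e \<in> prod_encode ` ({..<n} \<times> {..<n})" by (metis image_eqI prod_decode_inverse)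
  qed
  then have fE: "finite (E (chainP n))" by (rule finite_subset) simp
  have ori: "is_orientation (chainP n)" unfolding is_orientation_def using fE by auto
  have "\<not> is_cycle (chainP n) ws" for ws
  proof
    assume c: "is_cycle (chainP n) ws"
    let ?W = "walk_vertices (chainP n) ws"
    have cw: "closed_walk (chainP n) ws" using c unfolding is_cycle_def by blast
    have wE: "e \<in> E (chainP n)" if "e \<in> fst ` set ws" for e using cw that unfolding closed_walk_def by auto
    have WV: "?W \<subseteq> {..<n}" unfolding walk_vertices_def using wE by fastforce
    then have fW: "finite ?W" by (rule finite_subset) simp
    have "ws \<noteq> []" using cw unfolding closed_walk_def by blast
    then have "fst (hd ws) \<in> fst ` set ws" by simp
    then have neW: "?W \<noteq> {}" unfolding walk_vertices_def by blast
    define m where "m = Max ?W"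
    have mW: "m \<in> ?W" unfolding m_def using fW neW by simp
    then obtain e b where e: "e \<in> fst ` set ws" "ends (chainP n) e b = m" "\<not> arr (chainP n) e b"
      using c unfolding is_cycle_def by blast
    have bF: "b = False" using e(3) by simp
    have "snd (prod_decode e) \<in> ?W" unfolding walk_vertices_def using e(1)
      by (auto intro!: exI[of _ e] exI[of _ True])
    then have "snd (prod_decode e) \<le> m" unfolding m_def using fW by simp
    moreover have "fst (prod_decode e) = m" using e(2) bF by simp
    moreover have "fst (prod_decode e) < snd (prod_decode e)" using wE[OF e(1)] by simp
    ultimately show False by simp
  qed
  then show ?thesis unfolding signed_poset_def using ori by blast
qed

lemma chain_sinks: assumes "n > 0" shows "sinks (chainP n) = {n - 1}"
proof (intro set_eqI iffI)
  fix v assume v: "v \<in> sinks (chainP n)"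
  then have vn: "v \<in> V (chainP n)" and s0: "\<forall>e\<in>E (chainP n). \<forall>b. ends (chainP n) e b = v \<longrightarrow> arr (chainP n) e b"
    unfolding sinks_def by blast+
  have s: "\<forall>e\<in>E (chainP n). \<forall>b. ends (chainP n) e b = v \<longrightarrow> b" using s0 by simp
  have vn: "v < n" using vn by simp
  show "v \<in> {n - 1}"
  proof (rule ccontr)
    assume "v \<notin> {n - 1}"
    then have "v < n - 1" using vn by simp
    then have "prod_encode (v, n - 1) \<in> E (chainP n)" using assms by simp
    moreover have "ends (chainP n) (prod_encode (v, n - 1)) False = v" by simp
    ultimately show False using s by blast
  qed
next
  fix v assume "v \<in> {n - 1}"
  then have v: "v = n - 1" by simp
  have "b" if "e \<in> E (chainP n)" "ends (chainP n) e b = v" for e b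
  proof (rule ccontr)
    assume "\<not> b"
    then have "fst (prod_decode e) = n - 1" using that v by simp
    then show False using that(1) by (simp; arith)
  qed
  then show "v \<in> sinks (chainP n)" unfolding sinks_def using v assms by auto
qed

lemma pp_chain: "proper_coloring (chainP n) \<kappa> \<and> preserves (chainP n) \<kappa> \<longleftrightarrow> (\<forall>i j. i < j \<longrightarrow> j < n \<longrightarrow> \<kappa> i < \<kappa> j)"
proof
  assume h: "proper_coloring (chainP n) \<kappa> \<and> preserves (chainP n) \<kappa>"
  show "\<forall>i j. i < j \<longrightarrow> j < n \<longrightarrow> \<kappa> i < \<kappa> j"
  proof (intro allI impI)
    fix i j assume "i < j" "j < n"
    then have e: "prod_encode (i, j) \<in> E (chainP n)" by simp
    have "\<forall>b. arr (chainP n) (prod_encode (i, j)) b \<longleftrightarrow>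
      \<kappa> (ends (chainP n) (prod_encode (i, j)) b) > sgnval (chainP n) (prod_encode (i, j)) * \<kappa> (ends (chainP n) (prod_encode (i, j)) (\<not> b))"
      using h e unfolding preserves_def by blast
    then have "arr (chainP n) (prod_encode (i, j)) True \<longleftrightarrow>
      \<kappa> (ends (chainP n) (prod_encode (i, j)) True) > sgnval (chainP n) (prod_encode (i, j)) * \<kappa> (ends (chainP n) (prod_encode (i, j)) (\<not> True))"
      by (rule spec)
    then show "\<kappa> i < \<kappa> j" by simp
  qed
next
  assume h: "\<forall>i j. i < j \<longrightarrow> j < n \<longrightarrow> \<kappa> i < \<kappa> j"
  have "\<kappa> (fst (prod_decode e)) < \<kappa> (snd (prod_decode e))" if "e \<in> E (chainP n)" for e
    using h that by simp
  then show "proper_coloring (chainP n) \<kappa> \<and> preserves (chainP n) \<kappa>"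
    unfolding proper_coloring_def preserves_def
  proof (intro conjI ballI allI)
    fix e assume e: "e \<in> E (chainP n)"
    have lt: "\<kappa> (fst (prod_decode e)) < \<kappa> (snd (prod_decode e))" using h e by simp
    show "\<kappa> (ends (chainP n) e True) \<noteq> sgnval (chainP n) e * \<kappa> (ends (chainP n) e False)"
      using lt by simp
    fix b show "arr (chainP n) e b = (sgnval (chainP n) e * \<kappa> (ends (chainP n) e (\<not> b)) < \<kappa> (ends (chainP n) e b))"
      using lt by (cases b) auto
  qed
qed

lemma img_chain: "image_mset \<kappa> (mset_set {..<n}) = mset (map \<kappa> [0..<n])"
  by (simp add: lessThan_atLeast0)

lemma Ypos_chain: "Ypos (chainP n) = elem_sym n"
proof
  fix m
  define A where "A = {\<kappa> \<in> {..<n} \<rightarrow>\<^sub>E (UNIV :: int set). (\<forall>i j. i < j \<longrightarrow> j < n \<longrightarrow> \<kappa> i < \<kappa> j) \<and>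
      mset (map \<kappa> [0..<n]) = m}"
  have Y: "Ypos (chainP n) m = of_nat (card A)"
    unfolding Ypos_def A_def chain_simps img_chain
    using pp_chain[of n] by (metis (no_types, lifting))
  have sw: "sorted_wrt (<) (map \<kappa> [0..<n])" if "\<forall>i j. i < j \<longrightarrow> j < n \<longrightarrow> \<kappa> i < \<kappa> j" for \<kappa> :: "nat \<Rightarrow> int"
    using that by (auto simp: sorted_wrt_iff_nth_less)
  show "Ypos (chainP n) m = elem_sym n m"
  proof (cases "size m = n \<and> (\<forall>i. count m i \<le> 1)")
    case False
    have "A = {}"
    proof (rule ccontr)
      assume "A \<noteq> {}"
      then obtain \<kappa> where k: "\<forall>i j. i < j \<longrightarrow> j < n \<longrightarrow> \<kappa> i < \<kappa> j" "mset (map \<kappa> [0..<n]) = m"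
        unfolding A_def by blast
      have "distinct (map \<kappa> [0..<n])" using sw[OF k(1)] by (simp add: strict_sorted_iff)
      then have "\<forall>i. count m i \<le> 1" using k(2) distinct_count_atmost_1 by (metis le_refl zero_le_one)
      moreover have "size m = n" using k(2) by (metis length_map length_upt minus_nat.diff_0 size_mset)
      ultimately show False using False by blast
    qed
    then show ?thesis using False unfolding Y elem_sym_def by simp
  next
    case True
    define X where "X = set_mset m"
    define xs where "xs = sorted_list_of_set X"
    have fX: "finite X" unfolding X_def by simp
    have sxs: "sorted_wrt (<) xs" unfolding xs_def by (rule strict_sorted_list_of_set)
    have dxs: "distinct xs" and setxs: "set xs = X" using fX unfolding xs_def by auto
    have mxs: "mset xs = m"
    proof (rule multiset_eqI)
      fix a
      have "count (mset xs) a = (if a \<in> X then 1 else 0)" using dxs setxs distinct_count_atmost_1 by metis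
      also have "\<dots> = count m a" using True unfolding X_def by (metis count_eq_zero_iff le_antisym not_le_imp_less less_one)
      finally show "count (mset xs) a = count m a" .
    qed
    have lxs: "length xs = n" using True mxs by (metis size_mset)
    define \<kappa>0 where "\<kappa>0 = restrict (\<lambda>i. xs ! i) {..<n}"
    have mapk0: "map \<kappa>0 [0..<n] = xs"
      unfolding \<kappa>0_def using lxs by (intro nth_equalityI) auto
    have "A = {\<kappa>0}"
    proof (intro set_eqI iffI)
      fix \<kappa> assume "\<kappa> \<in> A"
      then have k: "\<kappa> \<in> {..<n} \<rightarrow>\<^sub>E UNIV" "\<forall>i j. i < j \<longrightarrow> j < n \<longrightarrow> \<kappa> i < \<kappa> j" "mset (map \<kappa> [0..<n]) = m"
        unfolding A_def by auto
      have "sorted_wrt (<) (map \<kappa> [0..<n])" using sw[OF k(2)] .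
      moreover have "set (map \<kappa> [0..<n]) = set xs" using k(3) mxs by (metis set_mset_mset)
      ultimately have eq: "map \<kappa> [0..<n] = xs"
        using sxs by (metis sorted_distinct_set_unique strict_sorted_iff)
      have "\<kappa> = \<kappa>0"
      proof (rule ext)
        fix i show "\<kappa> i = \<kappa>0 i"
        proof (cases "i < n")
          case True
          then have "\<kappa> i = map \<kappa> [0..<n] ! i" by simp
          then show ?thesis unfolding eq \<kappa>0_def using True by simp
        next
          case False
          then show ?thesis using k(1) unfolding \<kappa>0_def by (simp add: PiE_def extensional_def)
        qed
      qed
      then show "\<kappa> \<in> {\<kappa>0}" by simp
    next
      fix \<kappa> assume "\<kappa> \<in> {\<kappa>0}"
      then have k: "\<kappa> = \<kappa>0" by simp
      have "\<kappa>0 \<in> {..<n} \<rightarrow>\<^sub>E UNIV" unfolding \<kappa>0_def by simp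
      moreover have "\<forall>i j. i < j \<longrightarrow> j < n \<longrightarrow> \<kappa>0 i < \<kappa>0 j"
        using sorted_wrt_nth_less[OF sxs] lxs unfolding \<kappa>0_def by auto
      moreover have "mset (map \<kappa>0 [0..<n]) = m" unfolding mapk0 mxs ..
      ultimately show "\<kappa> \<in> A" unfolding A_def k by blast
    qed
    then show ?thesis using True unfolding Y elem_sym_def by simp
  qed
qed

theorem lemma6p9:
  fixes n :: nat
  assumes "n > 0"
  shows "phi (elem_sym n) = monom 1 1"
  unfolding phi_def
proof (rule the_equality)
  have r: "represents [(1, chainP n)] (elem_sym n)"
    unfolding represents_def using chain_sp by (simp add: Ypos_chain)
  show "\<exists>rs. represents rs (elem_sym n) \<and> monom 1 1 = (\<Sum>(c,P)\<leftarrow>rs. smult c (monom 1 (card (sinks P))))"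
    by (rule exI[of _ "[(1, chainP n)]"]) (use r chain_sinks[OF assms] in simp)
next
  fix p assume "\<exists>rs. represents rs (elem_sym n) \<and> p = (\<Sum>(c,P)\<leftarrow>rs. smult c (monom 1 (card (sinks P))))"
  then obtain rs where r: "represents rs (elem_sym n)" and p: "p = (\<Sum>(c,P)\<leftarrow>rs. smult c (monom 1 (card (sinks P))))"
    by blast
  have "p = Lf (elem_sym n)" using lin[of rs] r p unfolding represents_def by simp
  also have "\<dots> = Lf (Ypos (chainP n))" by (simp add: Ypos_chain)
  also have "\<dots> = monom 1 1" using Lf_Ypos(1)[OF chain_sp] chain_sinks[OF assms] by simp
  finally show "p = monom 1 1" .
qed

end
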